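(* Let $X_1,X_2,X_3$ be independent real variables ranging over the open positive orthant $(0,\infty)^3$, and consider the first-order linear system of partial differential equations for an unknown smooth function $\tau=\tau(X_1,X_2,X_3)$: $$\Big(X_1(X_1+2X_2+2X_3)\frac{\partial}{\partial X_1}+X_2(X_2+2X_3)\frac{\partial}{\partial X_2}+X_3^2\frac{\partial}{\partial X_3}\Big)\tau=0,\qquad \Big(X_1\frac{\partial}{\partial X_1}+X_2\frac{\partial}{\partial X_2}+X_3\frac{\partial}{\partial X_3}\Big)\tau=0 .$$ Then the function $$\tau_1^{(2)}(X_1,X_2,X_3)=\frac{(X_1+X_2)(X_2+X_3)}{X_2\,(X_1+X_2+X_3)}$$ is a solution of this system, and it is the only nontrivial solution up to functional dependence: every solution is (locally) of the form $F\big(\tau_1^{(2)}\big)$ for some function $F$ of one variable.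
   Context: This system arises in the construction of the lattice $W_2$ algebra (the $\mathfrak{sl}_2$ case): the first operator comes from the action of the screening operator $X_1+X_2+X_3$ via the bracket $\{X_i,X_j\}=2X_iX_j$ for $i<j$, $\{X_i,X_i\}=0$, and the second operator is the degree (Euler) operator, so solutions are degree-zero invariants. *)

theory Defs
  imports "HOL-Analysis.Analysis"
begin

definition orthant :: "(real^3) set" where
  "orthant = {x. \<forall>i. 0 < x $ i}"

definition screenField :: "real^3 \<Rightarrow> real^3" where
  "screenField x = vector [x$1 * (x$1 + 2 * x$2 + 2 * x$3), x$2 * (x$2 + 2 * x$3), (x$3)^2]"

definition eulerField :: "real^3 \<Rightarrow> real^3" where
  "eulerField x = x"

text \<open>A first order operator sum_i a_i(x) d/dX_i applied to a differentiable f at x is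
  the Frechet derivative of f at x applied to the coefficient vector a(x).\<close>
definition solves_system :: "(real^3 \<Rightarrow> real) \<Rightarrow> bool" where
  "solves_system f \<longleftrightarrow>
     (\<forall>x\<in>orthant. f differentiable (at x) \<and>
        frechet_derivative f (at x) (screenField x) = 0 \<and>
        frechet_derivative f (at x) (eulerField x) = 0)"

fun Ck_on_orthant :: "nat \<Rightarrow> (real^3 \<Rightarrow> real) \<Rightarrow> bool" where
  "Ck_on_orthant 0 f = continuous_on orthant f"
| "Ck_on_orthant (Suc k) f =
     (continuous_on orthant f \<and> (\<forall>x\<in>orthant. f differentiable (at x)) \<and>
      (\<forall>i. Ck_on_orthant k (\<lambda>x. frechet_derivative f (at x) (axis i 1))))"

definition smooth_on_orthant :: "(real^3 \<Rightarrow> real) \<Rightarrow> bool" where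
  "smooth_on_orthant f \<longleftrightarrow> (\<forall>k. Ck_on_orthant k f)"

definition tau12 :: "real^3 \<Rightarrow> real" where
  "tau12 x = ((x$1 + x$2) * (x$2 + x$3)) / (x$2 * (x$1 + x$2 + x$3))"

end

theory Submission
  imports Defs
begin

lemma orthant_iff: "x \<in> orthant \<longleftrightarrow> 0 < x$1 \<and> 0 < x$2 \<and> 0 < x$3"
  by (simp add: orthant_def forall_3)

lemma open_orthant: "open orthant"
proof -
  have e: "orthant = {x::real^3. 0 < x$1} \<inter> {x. 0 < x$2} \<inter> {x. 0 < x$3}"
    by (auto simp: orthant_iff)
  have o: "open {x::real^3. 0 < x$i}" for i
    by (rule open_Collect_less) (auto intro: continuous_intros)
  show ?thesis unfolding e by (intro open_Int o)
qed

lemma tau_deriv: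
  assumes "x \<in> orthant"
  shows "(tau12 has_derivative (\<lambda>h.
     ((((h$1 + h$2)*(x$2+x$3) + (x$1+x$2)*(h$2+h$3)) * (x$2*(x$1+x$2+x$3))
     - ((x$1 + x$2) * (x$2 + x$3)) * (h$2*(x$1+x$2+x$3) + x$2*(h$1+h$2+h$3))) /
     ((x$2*(x$1+x$2+x$3)) * (x$2*(x$1+x$2+x$3)))))) (at x)"
proof -
  from assms have p: "0 < x$1" "0 < x$2" "0 < x$3" by (auto simp: orthant_iff)
  have bl: "((\<lambda>x::real^3. x$i) has_derivative (\<lambda>h. h$i)) (at x)" for i
    by (rule bounded_linear_imp_has_derivative) auto
  have n1: "((\<lambda>x::real^3. x$1 + x$2) has_derivative (\<lambda>h. h$1 + h$2)) (at x)"
    by (intro has_derivative_add bl)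
  have n2: "((\<lambda>x::real^3. x$2 + x$3) has_derivative (\<lambda>h. h$2 + h$3)) (at x)"
    by (intro has_derivative_add bl)
  have s: "((\<lambda>x::real^3. x$1 + x$2 + x$3) has_derivative (\<lambda>h. h$1 + h$2 + h$3)) (at x)"
    by (intro has_derivative_add bl)
  have N: "((\<lambda>x::real^3. (x$1 + x$2) * (x$2 + x$3)) has_derivative
      (\<lambda>h. (x$1 + x$2) * (h$2 + h$3) + (h$1 + h$2) * (x$2 + x$3))) (at x)"
    by (rule has_derivative_mult[OF n1 n2])
  have D: "((\<lambda>x::real^3. x$2 * (x$1 + x$2 + x$3)) has_derivative
      (\<lambda>h. x$2 * (h$1 + h$2 + h$3) + h$2 * (x$1 + x$2 + x$3))) (at x)"
    by (rule has_derivative_mult[OF bl s])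
  have nz: "x$2 * (x$1 + x$2 + x$3) \<noteq> 0" using p by auto
  show ?thesis
    unfolding tau12_def[abs_def]
    using has_derivative_divide'[OF N D nz]
    by (simp add: algebra_simps)
qed

lemma tau_solves: "solves_system tau12"
  unfolding solves_system_def
proof
  fix x :: "real^3" assume x: "x \<in> orthant"
  from x have p: "0 < x$1" "0 < x$2" "0 < x$3" by (auto simp: orthant_iff)
  note d = tau_deriv[OF x]
  note fd = frechet_derivative_at[OF d, symmetric]
  show "tau12 differentiable at x \<and>
          frechet_derivative tau12 (at x) (screenField x) = 0 \<and>
          frechet_derivative tau12 (at x) (eulerField x) = 0"
    using d p unfolding fd
    by (auto simp: differentiable_def screenField_def eulerField_def field_simps power2_eq_square)
qed


definition phi :: "real^3 \<Rightarrow> real^3" where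
  "phi z = (1/z$1 - 1/z$2) *\<^sub>R axis 1 1 + (1/z$2 - 1/z$3) *\<^sub>R axis 2 1 + (1/z$3) *\<^sub>R axis 3 1"

lemma comb3:
  "((u::real) *\<^sub>R axis 1 1 + v *\<^sub>R axis 2 1 + w *\<^sub>R axis 3 1 :: real^3) $ 1 = u"
  "((u::real) *\<^sub>R axis 1 1 + v *\<^sub>R axis 2 1 + w *\<^sub>R axis 3 1 :: real^3) $ 2 = v"
  "((u::real) *\<^sub>R axis 1 1 + v *\<^sub>R axis 2 1 + w *\<^sub>R axis 3 1 :: real^3) $ 3 = w"
  by (simp_all add: axis_def)


lemma key:
  assumes sol: "solves_system f" and x: "x \<in> orthant" and y: "y \<in> orthant"
    and eq: "tau12 x = tau12 y"
  shows "f x = f y"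
proof -
  from x have px: "0 < x$1" "0 < x$2" "0 < x$3" by (auto simp: orthant_iff)
  from y have py: "0 < y$1" "0 < y$2" "0 < y$3" by (auto simp: orthant_iff)
  define a :: "real^3" where "a = vector [1/(x$1+x$2+x$3), 1/(x$2+x$3), 1/x$3]"
  define b :: "real^3" where "b = vector [1/(y$1+y$2+y$3), 1/(y$2+y$3), 1/y$3]"
  define d where "d = b - a"
  define c where "c t = a + t *\<^sub>R d" for t :: real
  define P where "P t = phi (c t)" for t
  have a1: "0 < a$1" "a$1 < a$2" "a$2 < a$3"
    using px by (auto simp: a_def intro!: divide_strict_left_mono)
  have b1: "0 < b$1" "b$1 < b$2" "b$2 < b$3"
    using py by (auto simp: b_def intro!: divide_strict_left_mono)
  have cc: "c t $ i = (1 - t) * a$i + t * b$i" for t i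
    by (simp add: c_def d_def algebra_simps)
  have cpos: "0 < c t $ 1" "c t $ 1 < c t $ 2" "c t $ 2 < c t $ 3" if "0 \<le> t" "t \<le> 1" for t
  proof -
    have h: "(1 - t) * u + t * v < (1 - t) * u' + t * v'"
      if "u < u'" "v < v'" for u u' v v' :: real
    proof (cases "t = 0")
      case True thus ?thesis using that by simp
    next
      case False
      hence "t * v < t * v'" using \<open>0 \<le> t\<close> that by simp
      moreover have "(1 - t) * u \<le> (1 - t) * u'" using that \<open>t \<le> 1\<close>
        by (intro mult_left_mono) auto
      ultimately show ?thesis by linarith
    qed
    show "0 < c t $ 1" "c t $ 1 < c t $ 2" "c t $ 2 < c t $ 3"
      unfolding cc using h[of 0 "a$1" 0 "b$1"] h[of "a$1" "a$2" "b$1" "b$2"]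
        h[of "a$2" "a$3" "b$2" "b$3"] a1 b1 by auto
  qed
  have Pc: "P t $ 1 = 1 / c t $ 1 - 1 / c t $ 2" "P t $ 2 = 1 / c t $ 2 - 1 / c t $ 3"
    "P t $ 3 = 1 / c t $ 3" for t
    by (simp_all add: P_def phi_def axis_def)
  have Porth: "P t \<in> orthant" if "0 \<le> t" "t \<le> 1" for t
    using cpos[OF that] unfolding orthant_iff Pc
    by (auto simp: field_simps)
  have P0: "P 0 = x"
    using px by (simp add: vec_eq_iff forall_3 Pc cc a_def field_simps)
  have P1: "P 1 = y"
    using py by (simp add: vec_eq_iff forall_3 Pc cc b_def field_simps)
  have constr: "(a$3-a$1)*(b$3-b$2) = (b$3-b$1)*(a$3-a$2)"
  proof -
    have tx: "tau12 x = (a$3-a$1)/(a$3-a$2)"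
    proof -
      have n: "x$1+x$2+x$3 \<noteq> 0" "x$2+x$3 \<noteq> 0" "x$3 \<noteq> 0" "x$2 \<noteq> 0" using px by auto
      have e1: "a$3-a$1 = (x$1+x$2)/(x$3*(x$1+x$2+x$3))"
        using n by (simp add: a_def field_simps)
      have e2: "a$3-a$2 = x$2/(x$3*(x$2+x$3))"
        using n by (simp add: a_def field_simps)
      have r1: "(x$1+x$2)*(x$3*(x$2+x$3)) = x$3*((x$1+x$2)*(x$2+x$3))"
        "(x$3*(x$1+x$2+x$3))*x$2 = x$3*(x$2*(x$1+x$2+x$3))" by (simp_all add: algebra_simps)
      show ?thesis unfolding e1 e2 tau12_def divide_divide_times_eq r1
        using n(3) by (rule mult_divide_mult_cancel_left[symmetric])
    qed
    have ty: "tau12 y = (b$3-b$1)/(b$3-b$2)"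
    proof -
      have n: "y$1+y$2+y$3 \<noteq> 0" "y$2+y$3 \<noteq> 0" "y$3 \<noteq> 0" "y$2 \<noteq> 0" using py by auto
      have e1: "b$3-b$1 = (y$1+y$2)/(y$3*(y$1+y$2+y$3))"
        using n by (simp add: b_def field_simps)
      have e2: "b$3-b$2 = y$2/(y$3*(y$2+y$3))"
        using n by (simp add: b_def field_simps)
      have r1: "(y$1+y$2)*(y$3*(y$2+y$3)) = y$3*((y$1+y$2)*(y$2+y$3))"
        "(y$3*(y$1+y$2+y$3))*y$2 = y$3*(y$2*(y$1+y$2+y$3))" by (simp_all add: algebra_simps)
      show ?thesis unfolding e1 e2 tau12_def divide_divide_times_eq r1
        using n(3) by (rule mult_divide_mult_cancel_left[symmetric])
    qed
    have "(a$3-a$1)/(a$3-a$2) = (b$3-b$1)/(b$3-b$2)" using eq tx ty by simp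
    moreover have "a$3-a$2 \<noteq> 0" "b$3-b$2 \<noteq> 0" using a1 b1 by auto
    ultimately show ?thesis by (simp add: field_simps)
  qed
  have deriv0: "DERIV (\<lambda>t. f (P t)) t :> 0" if t: "0 \<le> t" "t \<le> 1" for t
  proof -
    note cp = cpos[OF t]
    define c1 where "c1 = c t $ 1"
    define c2 where "c2 = c t $ 2"
    define c3 where "c3 = c t $ 3"
    have cn: "c1 \<noteq> 0" "c2 \<noteq> 0" "c3 \<noteq> 0" "c3 - c2 \<noteq> 0"
      using cp by (auto simp: c1_def c2_def c3_def)
    define w where "w = (- d$1/c1^2 + d$2/c2^2) *\<^sub>R axis 1 1 + (- d$2/c2^2 + d$3/c3^2) *\<^sub>R axis 2 1
       + (- d$3/c3^2) *\<^sub>R (axis 3 1 :: real^3)"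
    have ci: "((\<lambda>s. a$i + s * d$i) has_derivative (\<lambda>h. h * d$i)) (at t)" for i
      by (auto intro!: derivative_eq_intros)
    have inv: "((\<lambda>s. 1 / (a$i + s * d$i)) has_derivative (\<lambda>h. - (h * d$i) / (c t $ i)^2)) (at t)"
      if "c t $ i \<noteq> 0" for i
    proof -
      have e: "c t $ i = a$i + t * d$i" by (simp add: c_def)
      show ?thesis
        using has_derivative_divide'[OF has_derivative_const[of 1] ci[of i]] that unfolding e
        by (simp add: power2_eq_square)
    qed
    have Pform: "P = (\<lambda>s. (1 / (a$1 + s * d$1) - 1 / (a$2 + s * d$2)) *\<^sub>R axis 1 1
        + (1 / (a$2 + s * d$2) - 1 / (a$3 + s * d$3)) *\<^sub>R axis 2 1
        + (1 / (a$3 + s * d$3)) *\<^sub>R (axis 3 1 :: real^3))"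
      by (simp add: P_def phi_def c_def fun_eq_iff)
    have Pd: "(P has_derivative (\<lambda>h. h *\<^sub>R w)) (at t)"
    proof -
      have "(P has_derivative (\<lambda>h. (- (h * d$1) / (c t $ 1)^2 - - (h * d$2) / (c t $ 2)^2) *\<^sub>R axis 1 1
        + (- (h * d$2) / (c t $ 2)^2 - - (h * d$3) / (c t $ 3)^2) *\<^sub>R axis 2 1
        + (- (h * d$3) / (c t $ 3)^2) *\<^sub>R (axis 3 1 :: real^3))) (at t)"
        unfolding Pform
        by (intro has_derivative_add has_derivative_scaleR_left has_derivative_diff inv)
          (use cn in \<open>auto simp: c1_def c2_def c3_def\<close>)
      moreover have "(\<lambda>h. (- (h * d$1) / (c t $ 1)^2 - - (h * d$2) / (c t $ 2)^2) *\<^sub>R axis 1 1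
        + (- (h * d$2) / (c t $ 2)^2 - - (h * d$3) / (c t $ 3)^2) *\<^sub>R axis 2 1
        + (- (h * d$3) / (c t $ 3)^2) *\<^sub>R (axis 3 1 :: real^3)) = (\<lambda>h. h *\<^sub>R w)"
        by (auto simp: w_def c1_def c2_def c3_def vec_eq_iff forall_3 comb3 field_simps)
      ultimately show ?thesis by simp
    qed
    define \<beta> where "\<beta> = (d$3 - d$2) / (c3 - c2)"
    define \<alpha> where "\<alpha> = d$3 - \<beta> * c3"
    have d3: "d$3 = \<alpha> + \<beta> * c3" by (simp add: \<alpha>_def)
    have bb: "\<beta> * c3 - \<beta> * c2 = d$3 - d$2"
      using cn unfolding right_diff_distrib[symmetric] by (simp add: \<beta>_def)
    have d2: "d$2 = \<alpha> + \<beta> * c2" using bb by (simp add: \<alpha>_def)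
    have d1: "d$1 = \<alpha> + \<beta> * c1"
    proof -
      have E: "(d$1 - d$3) * (c3 - c2) - (d$3 - d$2) * (c1 - c3)
         = (a$3-a$1)*(b$3-b$2) - (b$3-b$1)*(a$3-a$2)"
        by (simp add: c1_def c2_def c3_def c_def d_def algebra_simps)
      hence "(d$1 - d$3) * (c3 - c2) = (d$3 - d$2) * (c1 - c3)" using constr by simp
      hence "d$1 - d$3 = \<beta> * (c1 - c3)" using cn by (simp add: \<beta>_def field_simps)
      thus ?thesis by (simp add: \<alpha>_def algebra_simps)
    qed
    have Pt: "P t = (1/c1 - 1/c2) *\<^sub>R axis 1 1 + (1/c2 - 1/c3) *\<^sub>R axis 2 1 + (1/c3) *\<^sub>R axis 3 1"
      by (simp add: P_def phi_def c1_def c2_def c3_def)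
    have wdec: "w = (- \<alpha>) *\<^sub>R screenField (P t) + (- \<beta>) *\<^sub>R eulerField (P t)"
    proof -
      have wc: "w$1 = - d$1/c1^2 + d$2/c2^2" "w$2 = - d$2/c2^2 + d$3/c3^2" "w$3 = - d$3/c3^2"
        by (simp_all add: w_def axis_def)
      have Ptc: "P t $ 1 = 1/c1 - 1/c2" "P t $ 2 = 1/c2 - 1/c3" "P t $ 3 = 1/c3"
        by (simp_all add: Pc c1_def c2_def c3_def)
      show ?thesis
        apply (simp add: vec_eq_iff forall_3 wc Ptc screenField_def eulerField_def)
        unfolding d1 d2 d3 using cn
        apply (simp add: field_simps power2_eq_square)
        done
    qed
    have Po: "P t \<in> orthant" using Porth[OF t] .
    have fdiff: "f differentiable at (P t)" using sol Po by (auto simp: solves_system_def)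
    define f' where "f' = frechet_derivative f (at (P t))"
    have fd: "(f has_derivative f') (at (P t))"
      using fdiff frechet_derivative_works unfolding f'_def by blast
    have z1: "f' (screenField (P t)) = 0" "f' (eulerField (P t)) = 0"
      using sol Po by (auto simp: solves_system_def f'_def)
    have lin: "linear f'" using fd has_derivative_linear by blast
    have fw: "f' w = 0"
      unfolding wdec using z1 lin by (simp add: linear_add linear_scale linear_diff linear_neg)
    have "((f \<circ> P) has_derivative (f' \<circ> (\<lambda>h. h *\<^sub>R w))) (at t)"
      by (rule diff_chain_at[OF Pd fd])
    moreover have "f' \<circ> (\<lambda>h. h *\<^sub>R w) = (\<lambda>h. 0 * h)"
      using fw lin by (auto simp: fun_eq_iff linear_scale)
    moreover have e0: "((*) (0::real)) = (\<lambda>h::real. 0::real)" by (rule ext) simp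
    ultimately show ?thesis
      unfolding has_field_derivative_def e0 by (simp add: comp_def)
  qed
  define h where "h t = f (P t)" for t
  have dh: "DERIV h t :> 0" if "0 \<le> t" "t \<le> 1" for t
    using deriv0[OF that] unfolding h_def[abs_def] .
  have cont: "continuous_on {0..1} h"
    using dh by (auto intro!: continuous_at_imp_continuous_on DERIV_isCont)
  have "h 1 = h 0"
    by (rule DERIV_isconst_end[OF _ cont]) (auto intro: dh)
  hence "f (P 1) = f (P 0)" by (simp add: h_def)
  thus ?thesis using P0 P1 by simp
qed


theorem mainTheorem1:
  shows "solves_system tau12
     \<and> (\<exists>x\<in>orthant. \<exists>y\<in>orthant. tau12 x \<noteq> tau12 y)
     \<and> (\<forall>f. smooth_on_orthant f \<and> solves_system f \<longrightarrow>
           (\<forall>p\<in>orthant. \<exists>U F. open U \<and> p \<in> U \<and> U \<subseteq> orthant \<and>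
                (\<forall>x\<in>U. f x = (F :: real \<Rightarrow> real) (tau12 x))))"
proof (intro conjI allI impI ballI)
  show "solves_system tau12" by (rule tau_solves)
  show "\<exists>x\<in>orthant. \<exists>y\<in>orthant. tau12 x \<noteq> tau12 y"
  proof (intro bexI)
    show "tau12 (vector [1,1,1]) \<noteq> tau12 (vector [1,2,1])"
      by (simp add: tau12_def)
  qed (simp_all add: orthant_iff)
next
  fix f p
  assume "smooth_on_orthant f \<and> solves_system f" and p: "p \<in> orthant"
  hence sol: "solves_system f" by simp
  define F where "F t = f (SOME x. x \<in> orthant \<and> tau12 x = t)" for t
  show "\<exists>U F. open U \<and> p \<in> U \<and> U \<subseteq> orthant \<and> (\<forall>x\<in>U. f x = (F :: real \<Rightarrow> real) (tau12 x))"
  proof (intro exI conjI ballI)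
    fix x assume x: "x \<in> orthant"
    have "\<exists>z. z \<in> orthant \<and> tau12 z = tau12 x" using x by blast
    hence "(SOME z. z \<in> orthant \<and> tau12 z = tau12 x) \<in> orthant \<and>
        tau12 (SOME z. z \<in> orthant \<and> tau12 z = tau12 x) = tau12 x"
      by (rule someI_ex)
    thus "f x = F (tau12 x)"
      unfolding F_def using key[OF sol x] by auto
  qed (use p open_orthant in auto)
qed

end
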